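(* Let $\mathbf{X},\mathbf{Y}$ be s$\mathcal{H}$rms. A map $\mathbf{Z}:[0,T]^2\to G(\mathcal{H})$ coincides with $\mathbf{X}\boxplus\mathbf{Y}$ if and only if $\mathbf{Z}_{s,t}=\mathbf{Z}_{s,u}\star\mathbf{Z}_{u,t}$ for all $s,u,t\in[0,T]$ and, for every $s\in[0,T]$, $$\mathbf{Z}_{s,t}=\mathbf{X}_{s,t}\star\mathbf{Y}_{s,t}+R_{s,t}$$ for some $R_{s,t}\in\mathcal{H}'$ with $\langle R_{s,t},x\rangle=o(|t-s|)$ as $t\to s$ for all $x\in\mathcal{H}$. Moreover $$\mathbf{X}_{s,t}\star\mathbf{Y}_{s,t}=\mathbf{Y}_{s,t}\star\mathbf{X}_{s,t}+r_{s,t}=\mathbf{X}_{s,t}+\mathbf{Y}_{s,t}-\mathbf{1}^*+r'_{s,t}$$ for some $r_{s,t},r'_{s,t}\in\mathcal{H}'$ with $\langle r_{s,t},x\rangle,\langle r'_{s,t},x\rangle=o(|t-s|)$ as $t\to s$ for all $x\in\mathcal{H}$.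
   Context: Fix $T>0$. $(\mathcal{H},\cdot,\Delta)$: connected, $\mathbb{N}$-graded, locally finite commutative Hopf algebra over $\mathbb{R}$ ($\mathcal{H}=\bigoplus_n\mathcal{H}_n$, $\dim\mathcal{H}_n<\infty$, $\mathcal{H}_0=\mathbb{R}\mathbf{1}$), counit $\mathbf{1}^*$. $\mathcal{H}'=\mathrm{Hom}(\mathcal{H},\mathbb{R})$ with pointwise topology and product $\langle\alpha\star\beta,h\rangle=\langle\alpha\otimes\beta,\Delta h\rangle$ (unit $\mathbf{1}^*$). $G(\mathcal{H})\subset\mathcal{H}'$: characters ($\alpha(hk)=\alpha(h)\alpha(k)$, $\alpha(\mathbf{1})=1$), a group under $\star$; $\mathfrak{g}(\mathcal{H})$: infinitesimal characters ($\alpha(hk)=\alpha(h)\mathbf{1}^*(k)+\mathbf{1}^*(h)\alpha(k)$). s$\mathcal{H}$rm: non-zero map $\mathbf{X}:[0,T]^2\to\mathcal{H}'$ with $\mathbf{X}_{s,t}\in G(\mathcal{H})$, $\mathbf{X}_{s,u}\star\mathbf{X}_{u,t}=\mathbf{X}_{s,t}$, and $t\mapsto\langle\mathbf{X}_{s,t},h\rangle$ smooth for all $h$ and $s$. Diagonal derivative $\dot{\mathbf{X}}_{s,s}=\partial_t|_{t=s}\mathbf{X}_{s,t}\in\mathfrak{g}(\mathcal{H})$. For a smooth $\eta:[0,T]\to\mathfrak{g}(\mathcal{H})$ the equation $\dot\gamma(t)=\gamma(t)\star\eta(t)$, $\gamma(0)=\mathbf{1}^*$, has a unique smooth solution (the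 Cartan development). The canonical sum $\mathbf{X}\boxplus\mathbf{Y}$ is the s$\mathcal{H}$rm $(s,t)\mapsto\mathbf{Z}_s^{-1}\star\mathbf{Z}_t$, where $\mathbf{Z}$ is the Cartan development of $t\mapsto\dot{\mathbf{X}}_{t,t}+\dot{\mathbf{Y}}_{t,t}$. *)

theory Defs
  imports Complex_Main "HOL-Library.Landau_Symbols" "HOL-Library.Function_Algebras"
begin

text \<open>The coproduct of H is represented by a function Delta mapping h to a finite
list of pairs (a,b), standing for the tensor sum of a (x) b in H (x) H.
Tensors are compared by evaluation against all elementary functionals
alpha (x) beta with alpha, beta linear (these separate points of H (x) H).\<close>

definition tpair :: "('h \<Rightarrow> real) \<Rightarrow> ('h \<Rightarrow> real) \<Rightarrow> ('h \<times> 'h) list \<Rightarrow> real" where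
  "tpair \<alpha> \<beta> L = sum_list (map (\<lambda>(a,b). \<alpha> a * \<beta> b) L)"

definition tensor_eq :: "('h::real_vector \<times> 'h) list \<Rightarrow> ('h \<times> 'h) list \<Rightarrow> bool" where
  "tensor_eq L M \<longleftrightarrow> (\<forall>\<alpha> \<beta>. linear \<alpha> \<longrightarrow> linear \<beta> \<longrightarrow> tpair \<alpha> \<beta> L = tpair \<alpha> \<beta> M)"

definition conv :: "('h \<Rightarrow> ('h \<times> 'h) list) \<Rightarrow> ('h \<Rightarrow> real) \<Rightarrow> ('h \<Rightarrow> real) \<Rightarrow> ('h \<Rightarrow> real)" where
  "conv \<Delta> \<alpha> \<beta> = (\<lambda>h. tpair \<alpha> \<beta> (\<Delta> h))"

definition conn_graded_hopf ::
  "('h::{comm_ring_1, real_algebra_1} \<Rightarrow> ('h \<times> 'h) list) \<Rightarrow> ('h \<Rightarrow> real) \<Rightarrow> (nat \<Rightarrow> 'h set) \<Rightarrow> bool" where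
  "conn_graded_hopf \<Delta> \<epsilon> Hg \<longleftrightarrow>
     \<comment> \<open>Delta is linear\<close>
     (\<forall>\<alpha> \<beta> h k (c::real). linear \<alpha> \<longrightarrow> linear \<beta> \<longrightarrow>
        tpair \<alpha> \<beta> (\<Delta> (h + k)) = tpair \<alpha> \<beta> (\<Delta> h) + tpair \<alpha> \<beta> (\<Delta> k) \<and>
        tpair \<alpha> \<beta> (\<Delta> (c *\<^sub>R h)) = c * tpair \<alpha> \<beta> (\<Delta> h)) \<and>
     \<comment> \<open>coassociativity\<close>
     (\<forall>\<alpha> \<beta> \<gamma> h. linear \<alpha> \<longrightarrow> linear \<beta> \<longrightarrow> linear \<gamma> \<longrightarrow>
        sum_list (map (\<lambda>(a,b). tpair \<alpha> \<beta> (\<Delta> a) * \<gamma> b) (\<Delta> h)) =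
        sum_list (map (\<lambda>(a,b). \<alpha> a * tpair \<beta> \<gamma> (\<Delta> b)) (\<Delta> h))) \<and>
     \<comment> \<open>counit\<close>
     linear \<epsilon> \<and>
     (\<forall>\<alpha> h. linear \<alpha> \<longrightarrow> tpair \<epsilon> \<alpha> (\<Delta> h) = \<alpha> h \<and> tpair \<alpha> \<epsilon> (\<Delta> h) = \<alpha> h) \<and>
     \<comment> \<open>Delta and eps are algebra morphisms\<close>
     (\<forall>\<alpha> \<beta> h k. linear \<alpha> \<longrightarrow> linear \<beta> \<longrightarrow>
        tpair \<alpha> \<beta> (\<Delta> (h * k)) =
        sum_list (map (\<lambda>(a,b). sum_list (map (\<lambda>(c,d). \<alpha> (a * c) * \<beta> (b * d)) (\<Delta> k))) (\<Delta> h))) \<and>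
     (\<forall>\<alpha> \<beta>. linear \<alpha> \<longrightarrow> linear \<beta> \<longrightarrow> tpair \<alpha> \<beta> (\<Delta> 1) = \<alpha> 1 * \<beta> 1) \<and>
     (\<forall>h k. \<epsilon> (h * k) = \<epsilon> h * \<epsilon> k) \<and> \<epsilon> 1 = 1 \<and>
     \<comment> \<open>antipode\<close>
     (\<exists>S::'h \<Rightarrow> 'h. linear S \<and>
        (\<forall>h. sum_list (map (\<lambda>(a,b). S a * b) (\<Delta> h)) = \<epsilon> h *\<^sub>R 1 \<and>
             sum_list (map (\<lambda>(a,b). a * S b) (\<Delta> h)) = \<epsilon> h *\<^sub>R 1)) \<and>
     \<comment> \<open>grading: H is the direct sum of the finite-dimensional subspaces H_n\<close>
     (\<forall>n. subspace (Hg n) \<and> (\<exists>B. finite B \<and> B \<subseteq> Hg n \<and> span B = Hg n)) \<and>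
     (\<forall>h. \<exists>!c::nat \<Rightarrow> 'h. (\<forall>n. c n \<in> Hg n) \<and> finite {n. c n \<noteq> 0} \<and>
            h = (\<Sum>n\<in>{n. c n \<noteq> 0}. c n)) \<and>
     (\<forall>m n a b. a \<in> Hg m \<longrightarrow> b \<in> Hg n \<longrightarrow> a * b \<in> Hg (m + n)) \<and>
     (\<forall>n h. h \<in> Hg n \<longrightarrow> (\<exists>L. tensor_eq (\<Delta> h) L \<and>
            (\<forall>(a,b)\<in>set L. \<exists>i j. i + j = n \<and> a \<in> Hg i \<and> b \<in> Hg j))) \<and>
     (\<forall>n h. 0 < n \<longrightarrow> h \<in> Hg n \<longrightarrow> \<epsilon> h = 0) \<and>
     \<comment> \<open>connected\<close>
     Hg 0 = range (\<lambda>r::real. r *\<^sub>R 1)"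

definition character :: "('h::{comm_ring_1, real_algebra_1} \<Rightarrow> real) \<Rightarrow> bool" where
  "character \<alpha> \<longleftrightarrow> linear \<alpha> \<and> (\<forall>h k. \<alpha> (h * k) = \<alpha> h * \<alpha> k) \<and> \<alpha> 1 = 1"

definition conv_inv :: "('h::real_vector \<Rightarrow> ('h \<times> 'h) list) \<Rightarrow> ('h \<Rightarrow> real) \<Rightarrow> ('h \<Rightarrow> real) \<Rightarrow> ('h \<Rightarrow> real)" where
  "conv_inv \<Delta> \<epsilon> \<alpha> = (THE \<beta>. linear \<beta> \<and> conv \<Delta> \<alpha> \<beta> = \<epsilon> \<and> conv \<Delta> \<beta> \<alpha> = \<epsilon>)"

definition smooth_on :: "real set \<Rightarrow> (real \<Rightarrow> real) \<Rightarrow> bool" where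
  "smooth_on S f \<longleftrightarrow> (\<exists>D::nat \<Rightarrow> real \<Rightarrow> real. (\<forall>x\<in>S. D 0 x = f x) \<and>
      (\<forall>n. \<forall>x\<in>S. (D n has_real_derivative D (Suc n) x) (at x within S)))"

definition shrm :: "('h::{comm_ring_1, real_algebra_1} \<Rightarrow> ('h \<times> 'h) list) \<Rightarrow> real \<Rightarrow>
     (real \<Rightarrow> real \<Rightarrow> 'h \<Rightarrow> real) \<Rightarrow> bool" where
  "shrm \<Delta> T X \<longleftrightarrow>
     (\<exists>s\<in>{0..T}. \<exists>t\<in>{0..T}. X s t \<noteq> (\<lambda>_. 0)) \<and>
     (\<forall>s\<in>{0..T}. \<forall>t\<in>{0..T}. character (X s t)) \<and>
     (\<forall>s\<in>{0..T}. \<forall>u\<in>{0..T}. \<forall>t\<in>{0..T}. conv \<Delta> (X s u) (X u t) = X s t) \<and>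
     (\<forall>s\<in>{0..T}. \<forall>h. smooth_on {0..T} (\<lambda>t. X s t h))"

definition diag_deriv :: "real \<Rightarrow> (real \<Rightarrow> real \<Rightarrow> 'h \<Rightarrow> real) \<Rightarrow> real \<Rightarrow> 'h \<Rightarrow> real" where
  "diag_deriv T X s = (\<lambda>h. THE D. ((\<lambda>t. X s t h) has_real_derivative D) (at s within {0..T}))"

definition cartan_dev :: "('h::{comm_ring_1, real_algebra_1} \<Rightarrow> ('h \<times> 'h) list) \<Rightarrow> ('h \<Rightarrow> real) \<Rightarrow> real \<Rightarrow>
     (real \<Rightarrow> 'h \<Rightarrow> real) \<Rightarrow> (real \<Rightarrow> 'h \<Rightarrow> real) \<Rightarrow> bool" where
  "cartan_dev \<Delta> \<epsilon> T \<eta> \<gamma> \<longleftrightarrow>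
     \<gamma> 0 = \<epsilon> \<and> (\<forall>t\<in>{0..T}. linear (\<gamma> t)) \<and>
     (\<forall>h. smooth_on {0..T} (\<lambda>t. \<gamma> t h)) \<and>
     (\<forall>t\<in>{0..T}. \<forall>h. ((\<lambda>u. \<gamma> u h) has_real_derivative conv \<Delta> (\<gamma> t) (\<eta> t) h) (at t within {0..T}))"

end

theory Submission
  imports Defs "HOL-Analysis.Analysis"
begin


lemma lin_add: "linear f \<Longrightarrow> f (x + y) = f x + f y"
  by (simp add: linear_iff)
lemma lin_scale: "linear (f::'a::real_vector \<Rightarrow> real) \<Longrightarrow> f (c *\<^sub>R x) = c * f x"
  by (simp add: linear_iff)
lemma lin_zero: "linear (f::'a::real_vector \<Rightarrow> real) \<Longrightarrow> f 0 = 0"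
  using lin_scale[of f 0 0] by simp
lemma lin_sum: "linear (f::'a::real_vector \<Rightarrow> real) \<Longrightarrow> f (sum g S) = (\<Sum>i\<in>S. f (g i))"
proof (induction S rule: infinite_finite_induct)
  case (infinite A) then show ?case by (simp add: lin_zero)
next
  case empty then show ?case by (simp add: lin_zero)
next
  case (insert x F) then show ?case by (simp add: lin_add)
qed
lemma lin_diff_fun: "linear (f::'a::real_vector \<Rightarrow> real) \<Longrightarrow> linear g \<Longrightarrow> linear (f - g)"
  by (simp add: linear_iff algebra_simps)
lemma lin_add_fun: "linear (f::'a::real_vector \<Rightarrow> real) \<Longrightarrow> linear g \<Longrightarrow> linear (f + g)"
  by (simp add: linear_iff algebra_simps)

lemma tpair_Nil[simp]: "tpair \<alpha> \<beta> [] = 0" by (simp add: tpair_def)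
lemma tpair_Cons[simp]: "tpair \<alpha> \<beta> (p # L) = \<alpha> (fst p) * \<beta> (snd p) + tpair \<alpha> \<beta> L"
  by (simp add: tpair_def split_beta)
lemma tpair_cong: "(\<And>a b. (a,b) \<in> set L \<Longrightarrow> \<alpha> a * \<beta> b = \<alpha>' a * \<beta>' b) \<Longrightarrow> tpair \<alpha> \<beta> L = tpair \<alpha>' \<beta>' L"
  by (induction L) (auto simp: split_beta)
lemma tpair_zero: "(\<And>a b. (a,b) \<in> set L \<Longrightarrow> \<alpha> a * \<beta> b = 0) \<Longrightarrow> tpair \<alpha> \<beta> L = 0"
  by (induction L) (auto simp: split_beta)
lemma tpair_add1: "tpair (\<alpha> + \<alpha>') \<beta> L = tpair \<alpha> \<beta> L + tpair \<alpha>' \<beta> L"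
  by (induction L) (auto simp: algebra_simps)
lemma tpair_diff1: "tpair (\<alpha> - \<alpha>') \<beta> L = tpair \<alpha> \<beta> L - tpair \<alpha>' \<beta> L"
  by (induction L) (auto simp: algebra_simps)
lemma tpair_add2: "tpair \<alpha> (\<beta> + \<beta>') L = tpair \<alpha> \<beta> L + tpair \<alpha> \<beta>' L"
  by (induction L) (auto simp: algebra_simps)
lemma tpair_diff2: "tpair \<alpha> (\<beta> - \<beta>') L = tpair \<alpha> \<beta> L - tpair \<alpha> \<beta>' L"
  by (induction L) (auto simp: algebra_simps)
lemma tpair_sum2: "tpair \<alpha> (\<lambda>y. \<Sum>n\<in>A. f n y) L = (\<Sum>n\<in>A. tpair \<alpha> (f n) L)"
  by (induction L) (auto simp: algebra_simps sum.distrib sum_distrib_left)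
lemma tpair_sum1: "tpair (\<lambda>y. \<Sum>n\<in>A. f n y) \<beta> L = (\<Sum>n\<in>A. tpair (f n) \<beta> L)"
  by (induction L) (auto simp: sum.distrib sum_distrib_right sum_distrib_left mult.commute)

lemma DERIV_tpair:
  assumes "\<And>a b. (a,b) \<in> set L \<Longrightarrow> ((\<lambda>t. f t a * g t b) has_real_derivative D a b) (at x within S)"
  shows "((\<lambda>t. tpair (f t) (g t) L) has_real_derivative (\<Sum>(a,b)\<leftarrow>L. D a b)) (at x within S)"
  using assms
proof (induction L)
  case Nil then show ?case by simp
next
  case (Cons p L)
  obtain a b where p: "p = (a,b)" by fastforce
  have 1: "((\<lambda>t. f t a * g t b) has_real_derivative D a b) (at x within S)" using Cons.prems p by auto
  have 2: "((\<lambda>t. tpair (f t) (g t) L) has_real_derivative (\<Sum>(a,b)\<leftarrow>L. D a b)) (at x within S)"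
    using Cons.IH Cons.prems by auto
  from DERIV_add[OF 1 2] show ?case by (simp add: p)
qed

locale hopf =
  fixes \<Delta> :: "'h::{comm_ring_1, real_algebra_1} \<Rightarrow> ('h \<times> 'h) list"
    and \<epsilon> :: "'h \<Rightarrow> real" and Hg :: "nat \<Rightarrow> 'h set"
  assumes H: "conn_graded_hopf \<Delta> \<epsilon> Hg"
begin

lemmas HH = H[unfolded conn_graded_hopf_def]
lemmas HH1 = HH[THEN conjunct1]
lemmas HH2 = HH[THEN conjunct2, THEN conjunct1]
lemmas HH3 = HH[THEN conjunct2, THEN conjunct2, THEN conjunct1]
lemmas HH4 = HH[THEN conjunct2, THEN conjunct2, THEN conjunct2, THEN conjunct1]
lemmas HH5 = HH[THEN conjunct2, THEN conjunct2, THEN conjunct2, THEN conjunct2, THEN conjunct1]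
lemmas HH6 = HH[THEN conjunct2, THEN conjunct2, THEN conjunct2, THEN conjunct2, THEN conjunct2, THEN conjunct1]
lemmas HH7 = HH[THEN conjunct2, THEN conjunct2, THEN conjunct2, THEN conjunct2, THEN conjunct2, THEN conjunct2, THEN conjunct1]
lemmas HH8 = HH[THEN conjunct2, THEN conjunct2, THEN conjunct2, THEN conjunct2, THEN conjunct2, THEN conjunct2, THEN conjunct2, THEN conjunct1]
lemmas HH9 = HH[THEN conjunct2, THEN conjunct2, THEN conjunct2, THEN conjunct2, THEN conjunct2, THEN conjunct2, THEN conjunct2, THEN conjunct2, THEN conjunct1]
lemmas HH10 = HH[THEN conjunct2, THEN conjunct2, THEN conjunct2, THEN conjunct2, THEN conjunct2, THEN conjunct2, THEN conjunct2, THEN conjunct2, THEN conjunct2, THEN conjunct1]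
lemmas HH11 = HH[THEN conjunct2, THEN conjunct2, THEN conjunct2, THEN conjunct2, THEN conjunct2, THEN conjunct2, THEN conjunct2, THEN conjunct2, THEN conjunct2, THEN conjunct2, THEN conjunct1]
lemmas HH12 = HH[THEN conjunct2, THEN conjunct2, THEN conjunct2, THEN conjunct2, THEN conjunct2, THEN conjunct2, THEN conjunct2, THEN conjunct2, THEN conjunct2, THEN conjunct2, THEN conjunct2, THEN conjunct1]
lemmas HH13 = HH[THEN conjunct2, THEN conjunct2, THEN conjunct2, THEN conjunct2, THEN conjunct2, THEN conjunct2, THEN conjunct2, THEN conjunct2, THEN conjunct2, THEN conjunct2, THEN conjunct2, THEN conjunct2, THEN conjunct1]
lemmas HH14 = HH[THEN conjunct2, THEN conjunct2, THEN conjunct2, THEN conjunct2, THEN conjunct2, THEN conjunct2, THEN conjunct2, THEN conjunct2, THEN conjunct2, THEN conjunct2, THEN conjunct2, THEN conjunct2, THEN conjunct2, THEN conjunct1]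
lemmas HH15 = HH[THEN conjunct2, THEN conjunct2, THEN conjunct2, THEN conjunct2, THEN conjunct2, THEN conjunct2, THEN conjunct2, THEN conjunct2, THEN conjunct2, THEN conjunct2, THEN conjunct2, THEN conjunct2, THEN conjunct2, THEN conjunct2]

lemma Dlin: "linear \<alpha> \<Longrightarrow> linear \<beta> \<Longrightarrow>
        tpair \<alpha> \<beta> (\<Delta> (h + k)) = tpair \<alpha> \<beta> (\<Delta> h) + tpair \<alpha> \<beta> (\<Delta> k) \<and>
        tpair \<alpha> \<beta> (\<Delta> (c *\<^sub>R h)) = c * tpair \<alpha> \<beta> (\<Delta> h)"
  using HH1 by blast
lemma coassoc: "linear \<alpha> \<Longrightarrow> linear \<beta> \<Longrightarrow> linear \<gamma> \<Longrightarrow>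
        sum_list (map (\<lambda>(a,b). tpair \<alpha> \<beta> (\<Delta> a) * \<gamma> b) (\<Delta> h)) =
        sum_list (map (\<lambda>(a,b). \<alpha> a * tpair \<beta> \<gamma> (\<Delta> b)) (\<Delta> h))"
  using HH2 by blast
lemma eps_lin: "linear \<epsilon>"
  using HH3 by blast
lemma counit: "linear \<alpha> \<Longrightarrow> tpair \<epsilon> \<alpha> (\<Delta> h) = \<alpha> h \<and> tpair \<alpha> \<epsilon> (\<Delta> h) = \<alpha> h"
  using HH4 by blast
lemma Delta1: "linear \<alpha> \<Longrightarrow> linear \<beta> \<Longrightarrow> tpair \<alpha> \<beta> (\<Delta> 1) = \<alpha> 1 * \<beta> 1"
  using HH6 by blast
lemma eps1: "\<epsilon> 1 = 1"
  using HH8 by blast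
lemma decomp: "\<exists>S c. finite S \<and> (\<forall>n\<in>S. c n \<in> Hg n) \<and> x = (\<Sum>n\<in>S. c n)"
proof -
  have "\<exists>!c::nat \<Rightarrow> 'h. (\<forall>n. c n \<in> Hg n) \<and> finite {n. c n \<noteq> 0} \<and>
            x = (\<Sum>n\<in>{n. c n \<noteq> 0}. c n)"
    using HH11 by blast
  then show ?thesis by blast
qed
lemma homog: "x \<in> Hg n \<Longrightarrow> \<exists>L. tensor_eq (\<Delta> x) L \<and>
            (\<forall>(a,b)\<in>set L. \<exists>i j. i + j = n \<and> a \<in> Hg i \<and> b \<in> Hg j)"
  using HH13 by blast

lemma Hg0: "Hg 0 = range (\<lambda>r::real. r *\<^sub>R 1)"
  using HH15 by blast

lemma Hg0_kill: "linear (f::'h\<Rightarrow>real) \<Longrightarrow> f 1 = 0 \<Longrightarrow> b \<in> Hg 0 \<Longrightarrow> f b = 0"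
  using Hg0 lin_scale[of f] by auto

lemma tensor_eqD: "tensor_eq L M \<Longrightarrow> linear \<alpha> \<Longrightarrow> linear \<beta> \<Longrightarrow> tpair \<alpha> \<beta> L = tpair \<alpha> \<beta> M"
  by (simp add: tensor_eq_def)

lemma conv_linear: assumes "linear \<alpha>" "linear \<beta>" shows "linear (conv \<Delta> \<alpha> \<beta>)"
  unfolding conv_def by (intro linearI) (simp_all add: Dlin[OF assms])

lemma conv_assoc:
  assumes "linear \<alpha>" "linear \<beta>" "linear \<gamma>"
  shows "conv \<Delta> (conv \<Delta> \<alpha> \<beta>) \<gamma> = conv \<Delta> \<alpha> (conv \<Delta> \<beta> \<gamma>)"
proof
  fix h
  have "conv \<Delta> (conv \<Delta> \<alpha> \<beta>) \<gamma> h = sum_list (map (\<lambda>(a,b). tpair \<alpha> \<beta> (\<Delta> a) * \<gamma> b) (\<Delta> h))"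
    by (simp add: conv_def tpair_def[of "\<lambda>h. tpair \<alpha> \<beta> (\<Delta> h)"])
  also have "\<dots> = sum_list (map (\<lambda>(a,b). \<alpha> a * tpair \<beta> \<gamma> (\<Delta> b)) (\<Delta> h))"
    using coassoc assms by blast
  also have "\<dots> = conv \<Delta> \<alpha> (conv \<Delta> \<beta> \<gamma>) h"
    by (simp add: conv_def tpair_def[of _ "\<lambda>h. tpair \<beta> \<gamma> (\<Delta> h)"])
  finally show "conv \<Delta> (conv \<Delta> \<alpha> \<beta>) \<gamma> h = conv \<Delta> \<alpha> (conv \<Delta> \<beta> \<gamma>) h" .
qed

lemma conv_eps_left: "linear \<alpha> \<Longrightarrow> conv \<Delta> \<epsilon> \<alpha> = \<alpha>"
  using counit by (auto simp: conv_def fun_eq_iff)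
lemma conv_eps_right: "linear \<alpha> \<Longrightarrow> conv \<Delta> \<alpha> \<epsilon> = \<alpha>"
  using counit by (auto simp: conv_def fun_eq_iff)


lemma inv_exists:
  assumes la: "linear \<alpha>" and a1: "\<alpha> 1 = 1"
  shows "\<exists>\<beta>. linear \<beta> \<and> conv \<Delta> \<alpha> \<beta> = \<epsilon> \<and> conv \<Delta> \<beta> \<alpha> = \<epsilon>"
proof -
  define \<mu> where "\<mu> = \<epsilon> - \<alpha>"
  have lmu: "linear \<mu>" using lin_diff_fun eps_lin la \<mu>_def by simp
  have mu1: "\<mu> 1 = 0" by (simp add: \<mu>_def eps1 a1)
  have amu: "\<alpha> = \<epsilon> - \<mu>" by (simp add: \<mu>_def fun_eq_iff)
  define pw where "pw n = ((conv \<Delta> \<mu>) ^^ n) \<epsilon>" for n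
  have pw0: "pw 0 = \<epsilon>" by (simp add: pw_def)
  have pwS: "pw (Suc n) = conv \<Delta> \<mu> (pw n)" for n by (simp add: pw_def)
  have lpw: "linear (pw n)" for n
    by (induction n) (simp_all add: pw0 pwS eps_lin conv_linear lmu)
  have pwS': "pw (Suc n) = conv \<Delta> (pw n) \<mu>" for n
  proof (induction n)
    case 0 show ?case by (simp add: pw0 pwS conv_eps_left conv_eps_right lmu)
  next
    case (Suc n)
    have "pw (Suc (Suc n)) = conv \<Delta> \<mu> (conv \<Delta> (pw n) \<mu>)" using Suc by (simp add: pwS)
    also have "\<dots> = conv \<Delta> (conv \<Delta> \<mu> (pw n)) \<mu>" using conv_assoc lmu lpw by simp
    also have "\<dots> = conv \<Delta> (pw (Suc n)) \<mu>" by (simp add: pwS)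
    finally show ?case .
  qed
  have nil_hom: "\<forall>m x. x \<in> Hg m \<longrightarrow> m < n \<longrightarrow> pw n x = 0" for n
  proof (induction n)
    case 0 show ?case by simp
  next
    case (Suc n)
    show ?case
    proof (intro allI impI)
      fix m x assume x: "x \<in> Hg m" and mn: "m < Suc n"
      obtain L where L: "tensor_eq (\<Delta> x) L" "\<forall>(a,b)\<in>set L. \<exists>i j. i + j = m \<and> a \<in> Hg i \<and> b \<in> Hg j"
        using homog[OF x] by blast
      have "pw (Suc n) x = tpair \<mu> (pw n) L"
        using tensor_eqD[OF L(1) lmu lpw] by (simp add: pwS conv_def)
      also have "\<dots> = 0"
      proof (rule tpair_zero)
        fix a b assume ab: "(a,b) \<in> set L"
        then obtain i j where ij: "i + j = m" "a \<in> Hg i" "b \<in> Hg j" using L(2) by blast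
        show "\<mu> a * pw n b = 0"
        proof (cases "i = 0")
          case True then have "\<mu> a = 0" using Hg0_kill[OF lmu mu1] ij by simp
          then show ?thesis by simp
        next
          case False then have "j < n" using ij mn by simp
          then have "pw n b = 0" using Suc.IH ij by blast
          then show ?thesis by simp
        qed
      qed
      finally show "pw (Suc n) x = 0" .
    qed
  qed
  have nil: "\<exists>K. \<forall>n>K. pw n x = 0" for x
  proof -
    obtain S c where S: "finite S" "\<forall>n\<in>S. c n \<in> Hg n" "x = (\<Sum>n\<in>S. c n)" using decomp by blast
    define K where "K = Max (insert 0 S)"
    have "\<forall>n>K. pw n x = 0"
    proof (intro allI impI)
      fix n assume "K < n"
      then have "\<forall>k\<in>S. k < n" using S(1) K_def by (meson Max_ge finite_insert insertCI le_less_trans)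
      then show "pw n x = 0" using S nil_hom by (auto simp: lin_sum[OF lpw] intro!: sum.neutral)
    qed
    then show ?thesis by blast
  qed
  define N where "N x = (SOME K. \<forall>n>K. pw n x = 0)" for x
  have N: "\<forall>n>N x. pw n x = 0" for x using someI_ex[OF nil[of x]] by (simp add: N_def)
  define \<beta> where "\<beta> x = (\<Sum>n\<le>N x. pw n x)" for x
  have \<beta>K: "\<beta> x = (\<Sum>n\<le>K. pw n x)" if "N x \<le> K" for x K
  proof -
    have "(\<Sum>n\<le>N x. pw n x) = (\<Sum>n\<le>K. pw n x)"
      by (rule sum.mono_neutral_left) (use that N in auto)
    then show ?thesis by (simp add: \<beta>_def)
  qed
  have lb: "linear \<beta>"
  proof (rule linearI)
    fix x y
    define K where "K = max (N x) (max (N y) (N (x+y)))"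
    show "\<beta> (x + y) = \<beta> x + \<beta> y"
      using \<beta>K[of "x+y" K] \<beta>K[of x K] \<beta>K[of y K] by (simp add: K_def lin_add[OF lpw] sum.distrib)
  next
    fix r x
    define K where "K = max (N x) (N (r *\<^sub>R x))"
    show "\<beta> (r *\<^sub>R x) = r *\<^sub>R \<beta> x"
      using \<beta>K[of x K] \<beta>K[of "r *\<^sub>R x" K] by (simp add: K_def lin_scale[OF lpw] sum_distrib_left)
  qed
  have big: "\<exists>K. N x \<le> K \<and> (\<forall>(a,b)\<in>set (\<Delta> x). N a \<le> K \<and> N b \<le> K)" for x
  proof -
    define M where "M = Max (insert 0 ((\<lambda>p. max (N (fst p)) (N (snd p))) ` set (\<Delta> x)))"
    define K where "K = max (N x) M"
    have "N a \<le> K \<and> N b \<le> K" if "(a,b) \<in> set (\<Delta> x)" for a b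
    proof -
      have "max (N a) (N b) \<le> M"
        unfolding M_def by (rule Max_ge) (use that in force)+
      then show ?thesis by (auto simp: K_def max_def split: if_splits)
    qed
    then show ?thesis by (intro exI[of _ K]) (auto simp: K_def)
  qed
  have right: "conv \<Delta> \<alpha> \<beta> = \<epsilon>"
  proof
    fix x
    obtain K where K: "N x \<le> K" "\<forall>(a,b)\<in>set (\<Delta> x). N a \<le> K \<and> N b \<le> K" using big by blast
    have "conv \<Delta> \<alpha> \<beta> x = tpair \<alpha> (\<lambda>y. \<Sum>n\<le>K. pw n y) (\<Delta> x)"
      unfolding conv_def by (rule tpair_cong) (use K \<beta>K in auto)
    also have "\<dots> = (\<Sum>n\<le>K. tpair \<alpha> (pw n) (\<Delta> x))" by (rule tpair_sum2)
    also have "\<dots> = (\<Sum>n\<le>K. pw n x - pw (Suc n) x)"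
      by (simp add: amu tpair_diff1 counit lpw pwS conv_def)
    also have "\<dots> = pw 0 x - pw (Suc K) x" by (rule sum_telescope)
    also have "\<dots> = \<epsilon> x" using N[of x] K(1) by (simp add: pw0)
    finally show "conv \<Delta> \<alpha> \<beta> x = \<epsilon> x" .
  qed
  have left: "conv \<Delta> \<beta> \<alpha> = \<epsilon>"
  proof
    fix x
    obtain K where K: "N x \<le> K" "\<forall>(a,b)\<in>set (\<Delta> x). N a \<le> K \<and> N b \<le> K" using big by blast
    have "conv \<Delta> \<beta> \<alpha> x = tpair (\<lambda>y. \<Sum>n\<le>K. pw n y) \<alpha> (\<Delta> x)"
      unfolding conv_def by (rule tpair_cong) (use K \<beta>K in auto)
    also have "\<dots> = (\<Sum>n\<le>K. tpair (pw n) \<alpha> (\<Delta> x))" by (rule tpair_sum1)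
    also have "\<dots> = (\<Sum>n\<le>K. pw n x - pw (Suc n) x)"
      by (simp add: amu tpair_diff2 counit lpw pwS' conv_def)
    also have "\<dots> = pw 0 x - pw (Suc K) x" by (rule sum_telescope)
    also have "\<dots> = \<epsilon> x" using N[of x] K(1) by (simp add: pw0)
    finally show "conv \<Delta> \<beta> \<alpha> x = \<epsilon> x" .
  qed
  show ?thesis using lb left right by blast
qed

lemma conv_inv_props:
  assumes la: "linear \<alpha>" and a1: "\<alpha> 1 = 1"
  shows "linear (conv_inv \<Delta> \<epsilon> \<alpha>) \<and> conv \<Delta> \<alpha> (conv_inv \<Delta> \<epsilon> \<alpha>) = \<epsilon> \<and> conv \<Delta> (conv_inv \<Delta> \<epsilon> \<alpha>) \<alpha> = \<epsilon>"
proof -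
  obtain \<beta> where \<beta>: "linear \<beta>" "conv \<Delta> \<alpha> \<beta> = \<epsilon>" "conv \<Delta> \<beta> \<alpha> = \<epsilon>"
    using inv_exists[OF la a1] by blast
  have uniq: "\<gamma> = \<beta>" if g: "linear \<gamma> \<and> conv \<Delta> \<alpha> \<gamma> = \<epsilon> \<and> conv \<Delta> \<gamma> \<alpha> = \<epsilon>" for \<gamma>
  proof -
    have "\<gamma> = conv \<Delta> \<gamma> \<epsilon>" using g conv_eps_right by simp
    also have "\<dots> = conv \<Delta> \<gamma> (conv \<Delta> \<alpha> \<beta>)" using \<beta> by simp
    also have "\<dots> = conv \<Delta> (conv \<Delta> \<gamma> \<alpha>) \<beta>" using conv_assoc[OF conjunct1[OF g] la \<beta>(1)] by (rule sym)
    also have "\<dots> = conv \<Delta> \<epsilon> \<beta>" using g by simp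
    also have "\<dots> = \<beta>" using \<beta> conv_eps_left by simp
    finally show ?thesis .
  qed
  show ?thesis unfolding conv_inv_def
    apply (rule theI2[of _ \<beta>])
    using \<beta> uniq by blast+
qed

lemma ode_unique:
  assumes s: "s \<in> {0..T}"
  and lD: "\<And>t. t\<in>{0..T} \<Longrightarrow> linear (D t)"
  and le: "\<And>t. t\<in>{0..T} \<Longrightarrow> linear (\<eta> t)" and e1: "\<And>t. t\<in>{0..T} \<Longrightarrow> \<eta> t 1 = 0"
  and dD: "\<And>t x. t\<in>{0..T} \<Longrightarrow> ((\<lambda>u. D u x) has_real_derivative conv \<Delta> (D t) (\<eta> t) x) (at t within {0..(T::real)})"
  and D0: "\<And>x. D s x = 0"
  and t: "t\<in>{0..T}"
  shows "D t x = 0"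
proof -
  have hom: "\<forall>x\<in>Hg m. \<forall>t\<in>{0..T}. D t x = 0" for m
  proof (induction m rule: less_induct)
    case (less m)
    show ?case
    proof (intro ballI)
      fix x t assume x: "x \<in> Hg m" and t: "t \<in> {0..T}"
      obtain L where L: "tensor_eq (\<Delta> x) L" "\<forall>(a,b)\<in>set L. \<exists>i j. i + j = m \<and> a \<in> Hg i \<and> b \<in> Hg j"
        using homog[OF x] by blast
      have z: "conv \<Delta> (D t') (\<eta> t') x = 0" if t': "t' \<in> {0..T}" for t'
      proof -
        have "conv \<Delta> (D t') (\<eta> t') x = tpair (D t') (\<eta> t') L"
          using tensor_eqD[OF L(1) lD[OF t'] le[OF t']] by (simp add: conv_def)
        also have "\<dots> = 0"
        proof (rule tpair_zero)
          fix a b assume "(a,b) \<in> set L"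
          then obtain i j where ij: "i + j = m" "a \<in> Hg i" "b \<in> Hg j" using L(2) by blast
          show "D t' a * \<eta> t' b = 0"
          proof (cases "j = 0")
            case True then have "\<eta> t' b = 0" using Hg0_kill[OF le[OF t'] e1[OF t']] ij by simp
            then show ?thesis by simp
          next
            case False then have "i < m" using ij by simp
            then have "D t' a = 0" using less.IH ij t' by blast
            then show ?thesis by simp
          qed
        qed
        finally show ?thesis .
      qed
      have "\<exists>c. \<forall>u\<in>{0..T}. D u x = c"
      proof (rule has_field_derivative_zero_constant)
        show "convex {0..T}" by simp
        fix u assume u: "u \<in> {0..T}"
        show "((\<lambda>u. D u x) has_field_derivative 0) (at u within {0..T})"
          using dD[OF u, of x] z[OF u] by simp
      qed
      then obtain c where c: "\<forall>u\<in>{0..T}. D u x = c" by blast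
      then show "D t x = 0" using c s t D0[of x] by metis
    qed
  qed
  obtain S c where S: "finite S" "\<forall>n\<in>S. c n \<in> Hg n" "x = (\<Sum>n\<in>S. c n)" using decomp by blast
  show ?thesis using S hom t by (auto simp: lin_sum[OF lD[OF t]] intro!: sum.neutral)
qed

end


lemma deriv_unique:
  fixes f :: "real \<Rightarrow> real"
  assumes "0 < T" "x \<in> {0..T}" "(f has_real_derivative a) (at x within {0..T})"
    "(f has_real_derivative b) (at x within {0..T})"
  shows "a = b"
  using vector_derivative_unique_within_closed_interval[of 0 T x f a b] assms
  by (simp add: has_real_derivative_iff_has_vector_derivative cbox_interval)

lemma deriv_cong_on:
  assumes "(f has_real_derivative D) (at x within S)" "x \<in> S" "\<And>y. y \<in> S \<Longrightarrow> f y = g y"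
  shows "(g has_real_derivative D) (at x within S)"
  by (rule has_field_derivative_transform_within[OF assms(1), where d=1]) (use assms in auto)

lemma smooth_deriv:
  fixes f :: "real \<Rightarrow> real" and x :: real
  assumes "smooth_on S f" "x \<in> S"
  shows "\<exists>d. (f has_real_derivative d) (at x within S)"
proof -
  obtain Dn :: "nat \<Rightarrow> real \<Rightarrow> real" where Dn: "\<forall>y\<in>S. Dn 0 y = f y"
      "\<forall>n. \<forall>y\<in>S. (Dn n has_real_derivative Dn (Suc n) y) (at y within S)"
    using assms(1) unfolding smooth_on_def by blast
  have "(Dn 0 has_real_derivative Dn (Suc 0) x) (at x within S)"
    using Dn(2) assms(2) by blast
  then have "(f has_real_derivative Dn (Suc 0) x) (at x within S)"
    by (rule deriv_cong_on) (use Dn(1) assms(2) in auto)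
  then show ?thesis by blast
qed

lemma o_of_deriv0:
  fixes f :: "real \<Rightarrow> real"
  assumes "(f has_real_derivative 0) (at s within S)" "f s = 0"
  shows "f \<in> o[at s within S](\<lambda>t. \<bar>t - s\<bar>)"
proof (rule smalloI_tendsto)
  have "((\<lambda>y. (f y - f s) / (y - s)) \<longlongrightarrow> 0) (at s within S)"
    using assms(1) by (simp add: has_field_derivative_iff)
  then have "((\<lambda>y. \<bar>f y / (y - s)\<bar>) \<longlongrightarrow> 0) (at s within S)"
    using assms(2) tendsto_rabs_zero by force
  then have "((\<lambda>y. \<bar>f y / \<bar>y - s\<bar>\<bar>) \<longlongrightarrow> 0) (at s within S)"
    by (simp add: abs_divide)
  then show "((\<lambda>y. f y / \<bar>y - s\<bar>) \<longlongrightarrow> 0) (at s within S)"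
    by (rule tendsto_rabs_zero_cancel)
  show "\<forall>\<^sub>F x in at s within S. \<bar>x - s\<bar> \<noteq> 0"
    by (simp add: eventually_at_filter)
qed

lemma deriv0_of_o:
  fixes f :: "real \<Rightarrow> real"
  assumes "f \<in> o[at s within S](\<lambda>t. \<bar>t - s\<bar>)" "f s = 0"
  shows "(f has_real_derivative 0) (at s within S)"
proof -
  have "((\<lambda>y. f y / \<bar>y - s\<bar>) \<longlongrightarrow> 0) (at s within S)"
    using smalloD_tendsto[OF assms(1)] .
  then have "((\<lambda>y. \<bar>f y / \<bar>y - s\<bar>\<bar>) \<longlongrightarrow> 0) (at s within S)"
    using tendsto_rabs_zero by force
  then have "((\<lambda>y. \<bar>f y / (y - s)\<bar>) \<longlongrightarrow> 0) (at s within S)"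
    by (simp add: abs_divide)
  then have "((\<lambda>y. f y / (y - s)) \<longlongrightarrow> 0) (at s within S)"
    by (rule tendsto_rabs_zero_cancel)
  then show ?thesis using assms(2) by (simp add: has_field_derivative_iff)
qed

lemma sum_list_pair_add:
  "(\<Sum>(a,b)\<leftarrow>L. f a b + g a b) = (\<Sum>(a,b)\<leftarrow>L. f a b) + (\<Sum>(a,b)\<leftarrow>L. (g a b::real))"
  by (induction L) (auto simp: split_beta)

lemma DERIV_conv:
  assumes "\<And>y. ((\<lambda>t. A t y) has_real_derivative A' y) (at t0 within S)"
    and "\<And>y. ((\<lambda>t. B t y) has_real_derivative B' y) (at t0 within S)"
  shows "((\<lambda>t. conv \<Delta> (A t) (B t) x) has_real_derivative
           conv \<Delta> A' (B t0) x + conv \<Delta> (A t0) B' x) (at t0 within S)"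
proof -
  have "((\<lambda>t. tpair (A t) (B t) (\<Delta> x)) has_real_derivative
     (\<Sum>(a,b)\<leftarrow>\<Delta> x. A' a * B t0 b + A t0 a * B' b)) (at t0 within S)"
  proof (rule DERIV_tpair)
    fix a b
    show "((\<lambda>t. A t a * B t b) has_real_derivative A' a * B t0 b + A t0 a * B' b) (at t0 within S)"
      using DERIV_mult[OF assms(1)[of a] assms(2)[of b]] by (simp add: mult.commute)
  qed
  then show ?thesis by (simp add: conv_def sum_list_pair_add tpair_def)
qed



lemma DERIV_conv_const:
  assumes "\<And>y. ((\<lambda>t. B t y) has_real_derivative B' y) (at t0 within S)"
  shows "((\<lambda>t. conv \<Delta> c (B t) x) has_real_derivative conv \<Delta> c B' x) (at t0 within S)"
proof -
  have "((\<lambda>t. tpair ((\<lambda>t. c) t) (B t) (\<Delta> x)) has_real_derivative (\<Sum>(a,b)\<leftarrow>\<Delta> x. c a * B' b)) (at t0 within S)"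
  proof (rule DERIV_tpair)
    fix a b
    show "((\<lambda>t. c a * B t b) has_real_derivative c a * B' b) (at t0 within S)"
      using DERIV_cmult[OF assms[of b], of "c a"] by simp
  qed
  then show ?thesis by (simp add: conv_def tpair_def)
qed

context hopf begin

lemma idem_eps:
  assumes "linear \<alpha>" "\<alpha> 1 = 1" "conv \<Delta> \<alpha> \<alpha> = \<alpha>"
  shows "\<alpha> = \<epsilon>"
proof -
  obtain \<beta> where \<beta>: "linear \<beta>" "conv \<Delta> \<alpha> \<beta> = \<epsilon>" "conv \<Delta> \<beta> \<alpha> = \<epsilon>"
    using inv_exists[OF assms(1,2)] by blast
  have "\<epsilon> = conv \<Delta> (conv \<Delta> \<alpha> \<alpha>) \<beta>" using assms(3) \<beta> by simp
  also have "\<dots> = conv \<Delta> \<alpha> (conv \<Delta> \<alpha> \<beta>)" by (rule conv_assoc[OF assms(1) assms(1) \<beta>(1)])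
  also have "\<dots> = \<alpha>" using \<beta>(2) conv_eps_right[OF assms(1)] by simp
  finally show ?thesis by simp
qed

context
  fixes T :: real and X :: "real \<Rightarrow> real \<Rightarrow> 'h \<Rightarrow> real"
  assumes T: "0 < T" and X: "shrm \<Delta> T X"
begin

lemma sX_lin: "s \<in> {0..T} \<Longrightarrow> t \<in> {0..T} \<Longrightarrow> linear (X s t) \<and> X s t 1 = 1"
  using X unfolding shrm_def character_def by blast

lemma sX_mult: "s \<in> {0..T} \<Longrightarrow> u \<in> {0..T} \<Longrightarrow> t \<in> {0..T} \<Longrightarrow> conv \<Delta> (X s u) (X u t) = X s t"
  using X unfolding shrm_def by blast

lemma sX_diag: "s \<in> {0..T} \<Longrightarrow> X s s = \<epsilon>"
  using idem_eps sX_lin sX_mult by blast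

lemma sX_deriv: "s \<in> {0..T} \<Longrightarrow> ((\<lambda>t. X s t h) has_real_derivative diag_deriv T X s h) (at s within {0..T})"
proof -
  assume s: "s \<in> {0..T}"
  have "smooth_on {0..T} (\<lambda>t. X s t h)" using X s unfolding shrm_def by blast
  then obtain d where d: "((\<lambda>t. X s t h) has_real_derivative d) (at s within {0..T})"
    using smooth_deriv s by blast
  have "diag_deriv T X s h = (THE D. ((\<lambda>t. X s t h) has_real_derivative D) (at s within {0..T}))"
    by (simp add: diag_deriv_def)
  also have "\<dots> = d"
    by (rule the_equality[of "\<lambda>D. ((\<lambda>t. X s t h) has_real_derivative D) (at s within {0..T})", OF d])
       (use deriv_unique[OF T s _ d] in blast)
  finally show ?thesis using d by simp
qed

lemma sX_dlin: "s \<in> {0..T} \<Longrightarrow> linear (diag_deriv T X s) \<and> diag_deriv T X s 1 = 0"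
proof -
  assume s: "s \<in> {0..T}"
  let ?d = "diag_deriv T X s"
  have "linear ?d"
  proof (rule linearI)
    fix a b
    have "((\<lambda>t. X s t a + X s t b) has_real_derivative ?d a + ?d b) (at s within {0..T})"
      by (intro DERIV_add sX_deriv s)
    then have "((\<lambda>t. X s t (a + b)) has_real_derivative ?d a + ?d b) (at s within {0..T})"
    proof (rule deriv_cong_on)
      show "s \<in> {0..T}" by (rule s)
      fix y assume y: "y \<in> {0..T}"
      show "X s y a + X s y b = X s y (a+b)" using lin_add[of "X s y" a b] sX_lin[OF s y] by simp
    qed
    then show "?d (a + b) = ?d a + ?d b"
      using deriv_unique[OF T s sX_deriv[OF s, of "a+b"]] by blast
  next
    fix c a
    have "((\<lambda>t. c * X s t a) has_real_derivative c * ?d a) (at s within {0..T})"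
      by (intro DERIV_cmult sX_deriv s)
    then have "((\<lambda>t. X s t (c *\<^sub>R a)) has_real_derivative c * ?d a) (at s within {0..T})"
    proof (rule deriv_cong_on)
      show "s \<in> {0..T}" by (rule s)
      fix y assume y: "y \<in> {0..T}"
      show "c * X s y a = X s y (c *\<^sub>R a)" using lin_scale[of "X s y" c a] sX_lin[OF s y] by simp
    qed
    then show "?d (c *\<^sub>R a) = c *\<^sub>R ?d a"
      using deriv_unique[OF T s sX_deriv[OF s, of "c *\<^sub>R a"]] by simp
  qed
  moreover have "?d 1 = 0"
  proof -
    have "((\<lambda>t. 1) has_real_derivative 0) (at s within {0..T})" by simp
    then have "((\<lambda>t. X s t 1) has_real_derivative 0) (at s within {0..T})"
    proof (rule deriv_cong_on)
      show "s \<in> {0..T}" by (rule s)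
      fix y assume y: "y \<in> {0..T}"
      show "1 = X s y 1" using sX_lin[OF s y] by simp
    qed
    then show ?thesis using deriv_unique[OF T s sX_deriv[OF s, of 1]] by blast
  qed
  ultimately show ?thesis by blast
qed

end
end



theorem proposition4p16:
  fixes \<Delta> :: "'h::{comm_ring_1, real_algebra_1} \<Rightarrow> ('h \<times> 'h) list"
    and \<epsilon> :: "'h \<Rightarrow> real" and Hg :: "nat \<Rightarrow> 'h set" and T :: real
    and X Y Z :: "real \<Rightarrow> real \<Rightarrow> 'h \<Rightarrow> real" and \<gamma> :: "real \<Rightarrow> 'h \<Rightarrow> real"
  assumes "0 < T"
    and "conn_graded_hopf \<Delta> \<epsilon> Hg"
    and "shrm \<Delta> T X" and "shrm \<Delta> T Y"
    and "cartan_dev \<Delta> \<epsilon> T (\<lambda>t. diag_deriv T X t + diag_deriv T Y t) \<gamma>"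
    and "\<forall>s\<in>{0..T}. \<forall>t\<in>{0..T}. character (Z s t)"
  shows "((\<forall>s\<in>{0..T}. \<forall>t\<in>{0..T}. Z s t = conv \<Delta> (conv_inv \<Delta> \<epsilon> (\<gamma> s)) (\<gamma> t)) \<longleftrightarrow>
          ((\<forall>s\<in>{0..T}. \<forall>u\<in>{0..T}. \<forall>t\<in>{0..T}. Z s t = conv \<Delta> (Z s u) (Z u t)) \<and>
           (\<forall>s\<in>{0..T}. \<exists>R::real \<Rightarrow> 'h \<Rightarrow> real.
              (\<forall>t\<in>{0..T}. linear (R t) \<and> Z s t = conv \<Delta> (X s t) (Y s t) + R t) \<and>
              (\<forall>x. (\<lambda>t. R t x) \<in> o[at s within {0..T}](\<lambda>t. \<bar>t - s\<bar>)))))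
        \<and> (\<forall>s\<in>{0..T}. \<exists>r r' :: real \<Rightarrow> 'h \<Rightarrow> real.
              (\<forall>t\<in>{0..T}. linear (r t) \<and> linear (r' t) \<and>
                 conv \<Delta> (X s t) (Y s t) = conv \<Delta> (Y s t) (X s t) + r t \<and>
                 conv \<Delta> (X s t) (Y s t) = X s t + Y s t - \<epsilon> + r' t) \<and>
              (\<forall>x. (\<lambda>t. r t x) \<in> o[at s within {0..T}](\<lambda>t. \<bar>t - s\<bar>) \<and>
                   (\<lambda>t. r' t x) \<in> o[at s within {0..T}](\<lambda>t. \<bar>t - s\<bar>)))"
proof -
  interpret hopf \<Delta> \<epsilon> Hg by (rule hopf.intro) (rule assms(2))
  note T = assms(1)
  define I where "I = {0..(T::real)}"
  define \<eta> where "\<eta> = (\<lambda>t. diag_deriv T X t + diag_deriv T Y t)"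
  have lX: "\<And>s t. s \<in> I \<Longrightarrow> t \<in> I \<Longrightarrow> linear (X s t)"
    using sX_lin[OF T assms(3)] I_def by blast
  have lY: "\<And>s t. s \<in> I \<Longrightarrow> t \<in> I \<Longrightarrow> linear (Y s t)"
    using sX_lin[OF T assms(4)] I_def by blast
  have lZ: "\<And>s t. s \<in> I \<Longrightarrow> t \<in> I \<Longrightarrow> linear (Z s t) \<and> Z s t 1 = 1"
    using assms(6) I_def unfolding character_def by blast
  have Xss: "\<And>s. s \<in> I \<Longrightarrow> X s s = \<epsilon>" using sX_diag[OF T assms(3)] I_def by blast
  have Yss: "\<And>s. s \<in> I \<Longrightarrow> Y s s = \<epsilon>" using sX_diag[OF T assms(4)] I_def by blast
  have dX: "\<And>s h. s \<in> I \<Longrightarrow> ((\<lambda>t. X s t h) has_real_derivative diag_deriv T X s h) (at s within I)"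
    using sX_deriv[OF T assms(3)] I_def by blast
  have dY: "\<And>s h. s \<in> I \<Longrightarrow> ((\<lambda>t. Y s t h) has_real_derivative diag_deriv T Y s h) (at s within I)"
    using sX_deriv[OF T assms(4)] I_def by blast
  have lXd: "\<And>s. s \<in> I \<Longrightarrow> linear (diag_deriv T X s)"
    using sX_dlin[OF T assms(3)] I_def by blast
  have lYd: "\<And>s. s \<in> I \<Longrightarrow> linear (diag_deriv T Y s)"
    using sX_dlin[OF T assms(4)] I_def by blast
  have le: "\<And>t. t \<in> I \<Longrightarrow> linear (\<eta> t) \<and> \<eta> t 1 = 0"
    using sX_dlin[OF T assms(3)] sX_dlin[OF T assms(4)] I_def
    by (auto simp: \<eta>_def intro: lin_add_fun)
  have \<gamma>0: "\<gamma> 0 = \<epsilon>" and l\<gamma>: "\<And>t. t \<in> I \<Longrightarrow> linear (\<gamma> t)"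
    and d\<gamma>: "\<And>t h. t \<in> I \<Longrightarrow> ((\<lambda>u. \<gamma> u h) has_real_derivative conv \<Delta> (\<gamma> t) (\<eta> t) h) (at t within I)"
    using assms(5) unfolding cartan_dev_def \<eta>_def I_def by blast+
  have I0: "0 \<in> I" using T I_def by simp
  have \<gamma>1: "\<gamma> t 1 = 1" if t: "t \<in> I" for t
  proof -
    have "\<exists>c. \<forall>u\<in>I. \<gamma> u 1 = c"
    proof (rule has_field_derivative_zero_constant)
      show "convex I" by (simp add: I_def)
      fix u assume u: "u \<in> I"
      have "conv \<Delta> (\<gamma> u) (\<eta> u) 1 = 0"
        using Delta1[OF l\<gamma>[OF u], of "\<eta> u"] le[OF u] by (simp add: conv_def)
      then show "((\<lambda>u. \<gamma> u 1) has_field_derivative 0) (at u within I)"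
        using d\<gamma>[OF u, of 1] by simp
    qed
    then obtain c where "\<forall>u\<in>I. \<gamma> u 1 = c" by blast
    then show ?thesis using t I0 \<gamma>0 eps1 by metis
  qed
  define g where "g s = conv_inv \<Delta> \<epsilon> (\<gamma> s)" for s
  have gp: "\<And>s. s \<in> I \<Longrightarrow> linear (g s) \<and> conv \<Delta> (\<gamma> s) (g s) = \<epsilon> \<and> conv \<Delta> (g s) (\<gamma> s) = \<epsilon>"
    unfolding g_def using conv_inv_props l\<gamma> \<gamma>1 by blast
  have ee: "conv \<Delta> \<epsilon> \<epsilon> = \<epsilon>" by (rule conv_eps_left[OF eps_lin])
  have dXY: "((\<lambda>t. conv \<Delta> (X s t) (Y s t) x) has_real_derivative \<eta> s x) (at s within I)"
    if s: "s \<in> I" for s x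
  proof -
    have "((\<lambda>t. conv \<Delta> (X s t) (Y s t) x) has_real_derivative
       conv \<Delta> (diag_deriv T X s) (Y s s) x + conv \<Delta> (X s s) (diag_deriv T Y s) x) (at s within I)"
      by (rule DERIV_conv) (use dX dY s in auto)
    then show ?thesis
      using Xss[OF s] Yss[OF s] conv_eps_right[OF lXd[OF s]] conv_eps_left[OF lYd[OF s]]
      by (simp add: \<eta>_def)
  qed
  have dYX: "((\<lambda>t. conv \<Delta> (Y s t) (X s t) x) has_real_derivative \<eta> s x) (at s within I)"
    if s: "s \<in> I" for s x
  proof -
    have "((\<lambda>t. conv \<Delta> (Y s t) (X s t) x) has_real_derivative
       conv \<Delta> (diag_deriv T Y s) (X s s) x + conv \<Delta> (Y s s) (diag_deriv T X s) x) (at s within I)"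
      by (rule DERIV_conv) (use dX dY s in auto)
    then show ?thesis
      using Xss[OF s] Yss[OF s] conv_eps_right[OF lYd[OF s]] conv_eps_left[OF lXd[OF s]]
      by (simp add: \<eta>_def add.commute)
  qed
  have part2: "\<exists>r r' :: real \<Rightarrow> 'h \<Rightarrow> real.
              (\<forall>t\<in>I. linear (r t) \<and> linear (r' t) \<and>
                 conv \<Delta> (X s t) (Y s t) = conv \<Delta> (Y s t) (X s t) + r t \<and>
                 conv \<Delta> (X s t) (Y s t) = X s t + Y s t - \<epsilon> + r' t) \<and>
              (\<forall>x. (\<lambda>t. r t x) \<in> o[at s within I](\<lambda>t. \<bar>t - s\<bar>) \<and>
                   (\<lambda>t. r' t x) \<in> o[at s within I](\<lambda>t. \<bar>t - s\<bar>))"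
    if s: "s \<in> I" for s
  proof -
    define r where "r t = conv \<Delta> (X s t) (Y s t) - conv \<Delta> (Y s t) (X s t)" for t
    define r' where "r' t = conv \<Delta> (X s t) (Y s t) - (X s t + Y s t - \<epsilon>)" for t
    have A: "\<forall>t\<in>I. linear (r t) \<and> linear (r' t) \<and>
                 conv \<Delta> (X s t) (Y s t) = conv \<Delta> (Y s t) (X s t) + r t \<and>
                 conv \<Delta> (X s t) (Y s t) = X s t + Y s t - \<epsilon> + r' t"
    proof
      fix t assume t: "t \<in> I"
      have "linear (r t)" unfolding r_def
        by (intro lin_diff_fun conv_linear lX lY s t)
      moreover have "linear (r' t)" unfolding r'_def
        by (intro lin_diff_fun lin_add_fun conv_linear lX lY s t eps_lin)
      ultimately show "linear (r t) \<and> linear (r' t) \<and>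
                 conv \<Delta> (X s t) (Y s t) = conv \<Delta> (Y s t) (X s t) + r t \<and>
                 conv \<Delta> (X s t) (Y s t) = X s t + Y s t - \<epsilon> + r' t"
        by (simp add: r_def r'_def fun_eq_iff)
    qed
    have B: "(\<lambda>t. r t x) \<in> o[at s within I](\<lambda>t. \<bar>t - s\<bar>) \<and>
                   (\<lambda>t. r' t x) \<in> o[at s within I](\<lambda>t. \<bar>t - s\<bar>)" for x
    proof
      have "((\<lambda>t. conv \<Delta> (X s t) (Y s t) x - conv \<Delta> (Y s t) (X s t) x) has_real_derivative \<eta> s x - \<eta> s x) (at s within I)"
        by (intro DERIV_diff dXY dYX s)
      then have "((\<lambda>t. r t x) has_real_derivative 0) (at s within I)"
        by (simp add: r_def)
      moreover have "r s x = 0" by (simp add: r_def Xss[OF s] Yss[OF s])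
      ultimately show "(\<lambda>t. r t x) \<in> o[at s within I](\<lambda>t. \<bar>t - s\<bar>)" by (rule o_of_deriv0)
    next
      have "((\<lambda>t. conv \<Delta> (X s t) (Y s t) x - (X s t x + Y s t x - \<epsilon> x)) has_real_derivative
          \<eta> s x - (diag_deriv T X s x + diag_deriv T Y s x - 0)) (at s within I)"
        by (intro DERIV_diff dXY DERIV_add dX dY s DERIV_const)
      then have "((\<lambda>t. r' t x) has_real_derivative 0) (at s within I)"
        by (simp add: r'_def \<eta>_def)
      moreover have "r' s x = 0" by (simp add: r'_def Xss[OF s] Yss[OF s] ee)
      ultimately show "(\<lambda>t. r' t x) \<in> o[at s within I](\<lambda>t. \<bar>t - s\<bar>)" by (rule o_of_deriv0)
    qed
    show ?thesis using A B by blast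
  qed
  have fwd: "(\<forall>s\<in>I. \<forall>u\<in>I. \<forall>t\<in>I. Z s t = conv \<Delta> (Z s u) (Z u t)) \<and>
           (\<forall>s\<in>I. \<exists>R::real \<Rightarrow> 'h \<Rightarrow> real.
              (\<forall>t\<in>I. linear (R t) \<and> Z s t = conv \<Delta> (X s t) (Y s t) + R t) \<and>
              (\<forall>x. (\<lambda>t. R t x) \<in> o[at s within I](\<lambda>t. \<bar>t - s\<bar>)))"
    if Zd: "\<forall>s\<in>I. \<forall>t\<in>I. Z s t = conv \<Delta> (g s) (\<gamma> t)"
  proof
    show "\<forall>s\<in>I. \<forall>u\<in>I. \<forall>t\<in>I. Z s t = conv \<Delta> (Z s u) (Z u t)"
    proof (intro ballI)
      fix s u t assume s: "s \<in> I" and u: "u \<in> I" and t: "t \<in> I"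
      have inner: "conv \<Delta> (\<gamma> u) (conv \<Delta> (g u) (\<gamma> t)) = conv \<Delta> (conv \<Delta> (\<gamma> u) (g u)) (\<gamma> t)"
        by (rule sym, rule conv_assoc) (use gp[OF u] l\<gamma> u t in auto)
      have "conv \<Delta> (Z s u) (Z u t) = conv \<Delta> (conv \<Delta> (g s) (\<gamma> u)) (conv \<Delta> (g u) (\<gamma> t))"
        using Zd s u t by simp
      also have "\<dots> = conv \<Delta> (g s) (conv \<Delta> (\<gamma> u) (conv \<Delta> (g u) (\<gamma> t)))"
        using conv_assoc gp l\<gamma> conv_linear s u t by simp
      also have "\<dots> = conv \<Delta> (g s) (conv \<Delta> (conv \<Delta> (\<gamma> u) (g u)) (\<gamma> t))"
        by (simp only: inner)
      also have "\<dots> = conv \<Delta> (g s) (\<gamma> t)"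
        using gp[OF u] conv_eps_left l\<gamma>[OF t] by simp
      also have "\<dots> = Z s t" using Zd s t by simp
      finally show "Z s t = conv \<Delta> (Z s u) (Z u t)" by simp
    qed
  next
    show "\<forall>s\<in>I. \<exists>R::real \<Rightarrow> 'h \<Rightarrow> real.
              (\<forall>t\<in>I. linear (R t) \<and> Z s t = conv \<Delta> (X s t) (Y s t) + R t) \<and>
              (\<forall>x. (\<lambda>t. R t x) \<in> o[at s within I](\<lambda>t. \<bar>t - s\<bar>))"
    proof
      fix s assume s: "s \<in> I"
      define R where "R t = Z s t - conv \<Delta> (X s t) (Y s t)" for t
      have A: "\<forall>t\<in>I. linear (R t) \<and> Z s t = conv \<Delta> (X s t) (Y s t) + R t"
      proof
        fix t assume t: "t \<in> I"
        have "linear (R t)" unfolding R_def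
          using lZ[OF s t] by (intro lin_diff_fun conv_linear lX lY s t) blast
        then show "linear (R t) \<and> Z s t = conv \<Delta> (X s t) (Y s t) + R t"
          by (simp add: R_def fun_eq_iff)
      qed
      have B: "(\<lambda>t. R t x) \<in> o[at s within I](\<lambda>t. \<bar>t - s\<bar>)" for x
      proof -
        have "((\<lambda>t. conv \<Delta> (g s) (\<gamma> t) x) has_real_derivative conv \<Delta> (g s) (conv \<Delta> (\<gamma> s) (\<eta> s)) x) (at s within I)"
          by (rule DERIV_conv_const) (rule d\<gamma>[OF s])
        moreover have "conv \<Delta> (g s) (conv \<Delta> (\<gamma> s) (\<eta> s)) = \<eta> s"
          using conv_assoc[of "g s" "\<gamma> s" "\<eta> s"] gp[OF s] l\<gamma>[OF s] le[OF s] conv_eps_left by simp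
        ultimately have "((\<lambda>t. conv \<Delta> (g s) (\<gamma> t) x - conv \<Delta> (X s t) (Y s t) x) has_real_derivative \<eta> s x - \<eta> s x) (at s within I)"
          using dXY[OF s] by (intro DERIV_diff) auto
        then have "((\<lambda>t. conv \<Delta> (g s) (\<gamma> t) x - conv \<Delta> (X s t) (Y s t) x) has_real_derivative 0) (at s within I)"
          by simp
        then have "((\<lambda>t. R t x) has_real_derivative 0) (at s within I)"
        proof (rule deriv_cong_on)
          show "s \<in> I" by (rule s)
          fix y assume "y \<in> I"
          then show "conv \<Delta> (g s) (\<gamma> y) x - conv \<Delta> (X s y) (Y s y) x = R y x"
            using Zd s by (simp add: R_def)
        qed
        moreover have "R s x = 0"
          using Zd s gp[OF s] by (simp add: R_def Xss[OF s] Yss[OF s] ee)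
        ultimately show ?thesis by (rule o_of_deriv0)
      qed
      show "\<exists>R::real \<Rightarrow> 'h \<Rightarrow> real.
              (\<forall>t\<in>I. linear (R t) \<and> Z s t = conv \<Delta> (X s t) (Y s t) + R t) \<and>
              (\<forall>x. (\<lambda>t. R t x) \<in> o[at s within I](\<lambda>t. \<bar>t - s\<bar>))"
        using A B by blast
    qed
  qed
  have bwd: "\<forall>s\<in>I. \<forall>t\<in>I. Z s t = conv \<Delta> (g s) (\<gamma> t)"
    if mult: "\<forall>s\<in>I. \<forall>u\<in>I. \<forall>t\<in>I. Z s t = conv \<Delta> (Z s u) (Z u t)"
    and ex: "\<forall>s\<in>I. \<exists>R::real \<Rightarrow> 'h \<Rightarrow> real.
              (\<forall>t\<in>I. linear (R t) \<and> Z s t = conv \<Delta> (X s t) (Y s t) + R t) \<and>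
              (\<forall>x. (\<lambda>t. R t x) \<in> o[at s within I](\<lambda>t. \<bar>t - s\<bar>))"
  proof -
    have Zss: "Z s s = \<epsilon>" if s: "s \<in> I" for s
      using idem_eps[of "Z s s"] lZ[OF s s] mult s by metis
    have dZ0: "((\<lambda>u. Z t0 u y) has_real_derivative \<eta> t0 y) (at t0 within I)" if t0: "t0 \<in> I" for t0 y
    proof -
      obtain R where R: "\<forall>t\<in>I. linear (R t) \<and> Z t0 t = conv \<Delta> (X t0 t) (Y t0 t) + R t"
        "(\<lambda>t. R t y) \<in> o[at t0 within I](\<lambda>t. \<bar>t - t0\<bar>)"
        using ex t0 by blast
      have "Z t0 t0 y = conv \<Delta> (X t0 t0) (Y t0 t0) y + R t0 y" using R(1) t0 by simp
      then have "R t0 y = 0" using Zss[OF t0] Xss[OF t0] Yss[OF t0] ee by simp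
      then have dR: "((\<lambda>t. R t y) has_real_derivative 0) (at t0 within I)"
        by (intro deriv0_of_o R(2))
      have "((\<lambda>t. conv \<Delta> (X t0 t) (Y t0 t) y + R t y) has_real_derivative \<eta> t0 y + 0) (at t0 within I)"
        by (intro DERIV_add dXY t0 dR)
      then have "((\<lambda>t. conv \<Delta> (X t0 t) (Y t0 t) y + R t y) has_real_derivative \<eta> t0 y) (at t0 within I)"
        by simp
      then show ?thesis
      proof (rule deriv_cong_on)
        show "t0 \<in> I" by (rule t0)
        fix u assume "u \<in> I"
        then show "conv \<Delta> (X t0 u) (Y t0 u) y + R u y = Z t0 u y" using R(1) by simp
      qed
    qed
    have dZ: "((\<lambda>u. Z s u x) has_real_derivative conv \<Delta> (Z s t0) (\<eta> t0) x) (at t0 within I)"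
      if s: "s \<in> I" and t0: "t0 \<in> I" for s t0 x
    proof -
      have "((\<lambda>u. conv \<Delta> (Z s t0) (Z t0 u) x) has_real_derivative conv \<Delta> (Z s t0) (\<eta> t0) x) (at t0 within I)"
        by (rule DERIV_conv_const) (rule dZ0[OF t0])
      then show ?thesis
      proof (rule deriv_cong_on)
        show "t0 \<in> I" by (rule t0)
        fix u assume "u \<in> I"
        then show "conv \<Delta> (Z s t0) (Z t0 u) x = Z s u x" using mult s t0 by metis
      qed
    qed
    show ?thesis
    proof (intro ballI)
      fix s t assume s: "s \<in> I" and t: "t \<in> I"
      define D where "D u = conv \<Delta> (\<gamma> s) (Z s u) - \<gamma> u" for u
      have lD: "linear (D u)" if u: "u \<in> I" for u
        unfolding D_def using lZ[OF s u] by (intro lin_diff_fun conv_linear l\<gamma> s u) blast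
      have D0: "D t x = 0" for x
      proof (rule ode_unique[where T = T and s = s and \<eta> = \<eta> and D = D])
        show "s \<in> {0..T}" using s I_def by simp
        show "t \<in> {0..T}" using t I_def by simp
        show "\<And>t. t \<in> {0..T} \<Longrightarrow> linear (D t)" using lD I_def by simp
        show "\<And>t. t \<in> {0..T} \<Longrightarrow> linear (\<eta> t)" using le I_def by simp
        show "\<And>t. t \<in> {0..T} \<Longrightarrow> \<eta> t 1 = 0" using le I_def by simp
        show "D s x = 0" for x
          using gp[OF s] conv_eps_right[OF l\<gamma>[OF s]] by (simp add: D_def Zss[OF s])
        fix t0 x assume "t0 \<in> {0..T}"
        then have t0: "t0 \<in> I" using I_def by simp
        have "((\<lambda>u. conv \<Delta> (\<gamma> s) (Z s u) x - \<gamma> u x) has_real_derivative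
            conv \<Delta> (\<gamma> s) (conv \<Delta> (Z s t0) (\<eta> t0)) x - conv \<Delta> (\<gamma> t0) (\<eta> t0) x) (at t0 within I)"
          by (intro DERIV_diff DERIV_conv_const dZ s t0 d\<gamma>)
        moreover have "conv \<Delta> (\<gamma> s) (conv \<Delta> (Z s t0) (\<eta> t0)) = conv \<Delta> (conv \<Delta> (\<gamma> s) (Z s t0)) (\<eta> t0)"
          using conv_assoc l\<gamma>[OF s] lZ[OF s t0] le[OF t0] by simp
        moreover have "conv \<Delta> (conv \<Delta> (\<gamma> s) (Z s t0)) (\<eta> t0) x - conv \<Delta> (\<gamma> t0) (\<eta> t0) x
              = conv \<Delta> (D t0) (\<eta> t0) x"
          by (simp add: D_def conv_def tpair_diff1)
        ultimately show "((\<lambda>u. D u x) has_real_derivative conv \<Delta> (D t0) (\<eta> t0) x) (at t0 within {0..T})"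
          by (simp add: D_def I_def)
      qed
      have "conv \<Delta> (\<gamma> s) (Z s t) = \<gamma> t"
        using D0 by (simp add: D_def fun_eq_iff)
      have "Z s t = conv \<Delta> (conv \<Delta> (g s) (\<gamma> s)) (Z s t)"
        using gp[OF s] conv_eps_left lZ[OF s t] by simp
      also have "\<dots> = conv \<Delta> (g s) (conv \<Delta> (\<gamma> s) (Z s t))"
        by (rule conv_assoc) (use gp[OF s] l\<gamma>[OF s] lZ[OF s t] in auto)
      also have "\<dots> = conv \<Delta> (g s) (\<gamma> t)" using \<open>conv \<Delta> (\<gamma> s) (Z s t) = \<gamma> t\<close> by simp
      finally show "Z s t = conv \<Delta> (g s) (\<gamma> t)" .
    qed
  qed
  have part1: "(\<forall>s\<in>I. \<forall>t\<in>I. Z s t = conv \<Delta> (g s) (\<gamma> t)) \<longleftrightarrow>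
          ((\<forall>s\<in>I. \<forall>u\<in>I. \<forall>t\<in>I. Z s t = conv \<Delta> (Z s u) (Z u t)) \<and>
           (\<forall>s\<in>I. \<exists>R::real \<Rightarrow> 'h \<Rightarrow> real.
              (\<forall>t\<in>I. linear (R t) \<and> Z s t = conv \<Delta> (X s t) (Y s t) + R t) \<and>
              (\<forall>x. (\<lambda>t. R t x) \<in> o[at s within I](\<lambda>t. \<bar>t - s\<bar>))))"
    using fwd bwd by blast
  show ?thesis using part1 part2 unfolding I_def g_def by blast
qed


end
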